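(* Let $K_{23}-K_5$ denote the graph with vertex set $\mathbb{Z}_{18}\cup\{a,b,c,d,e\}$ containing all edges except the ten edges among $a,b,c,d,e$. Consider the cyclic sequences $$L_0=(10, 16, a, 2, b, 4, c, 8, d, 7, e, 17, 14, 3, 9, 12, 13, 5, 1, 6, 15, 11),$$ $$L_1=(8, 1, a, 2, 12, 9, 3, 7, c, 14, b, 13, e, 11, d, 16, 10, 5, 17, 4, 15, 6),$$ $$L_2=(16, a, 17, 7, 4, 3, 12, 2, d, 10, c, 11, 14, 13, 8, 6, 9, 15, 1, e, 5, b).$$ For $\gamma\in\mathbb{Z}_{18}$, let the rotation at $\gamma$ be obtained from $L_{\gamma\bmod 3}$ by adding $\gamma$ (mod 18) to every numerical entry, leaving letters unchanged. Then there exist rotations at $a,b,c,d,e$ such that the resulting rotation system is a triangular embedding of $K_{23}-K_5$ in the orientable surface $S_{30}$ of genus $30$.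
   Context: A rotation system on a simple graph assigns to each vertex a cyclic ordering of its neighbors and determines a cellular orientable embedding. An embedding is triangular if every face is a triangle. $S_k$ denotes the orientable surface of genus $k$. *)

theory Defs
  imports Main
begin

definition simple_graph :: "'v set \<Rightarrow> ('v \<Rightarrow> 'v \<Rightarrow> bool) \<Rightarrow> bool" where
  "simple_graph V Adj \<longleftrightarrow> finite V \<and> (\<forall>u v. Adj u v \<longrightarrow> u \<in> V \<and> v \<in> V \<and> u \<noteq> v \<and> Adj v u)"

definition neighbors :: "('v \<Rightarrow> 'v \<Rightarrow> bool) \<Rightarrow> 'v \<Rightarrow> 'v set" where
  "neighbors Adj v = {u. Adj v u}"

text \<open>A rotation system: at each vertex a cyclic ordering (given by a list,
read cyclically) of its neighbours, each neighbour exactly once.\<close>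

definition rotation_system :: "'v set \<Rightarrow> ('v \<Rightarrow> 'v \<Rightarrow> bool) \<Rightarrow> ('v \<Rightarrow> 'v list) \<Rightarrow> bool" where
  "rotation_system V Adj rot \<longleftrightarrow>
     (\<forall>v\<in>V. distinct (rot v) \<and> set (rot v) = neighbors Adj v)"

definition rot_succ :: "('v \<Rightarrow> 'v list) \<Rightarrow> 'v \<Rightarrow> 'v \<Rightarrow> 'v" where
  "rot_succ rot v u =
     (THE w. \<exists>i < length (rot v). rot v ! i = u \<and> w = rot v ! ((i + 1) mod length (rot v)))"

definition darts :: "('v \<Rightarrow> 'v \<Rightarrow> bool) \<Rightarrow> ('v \<times> 'v) set" where
  "darts Adj = {(u, v). Adj u v}"

definition face_step :: "('v \<Rightarrow> 'v list) \<Rightarrow> 'v \<times> 'v \<Rightarrow> 'v \<times> 'v" where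
  "face_step rot d = (snd d, rot_succ rot (snd d) (fst d))"

definition face_of :: "('v \<Rightarrow> 'v list) \<Rightarrow> 'v \<times> 'v \<Rightarrow> ('v \<times> 'v) set" where
  "face_of rot d = {(face_step rot ^^ n) d | n. True}"

definition faces :: "('v \<Rightarrow> 'v \<Rightarrow> bool) \<Rightarrow> ('v \<Rightarrow> 'v list) \<Rightarrow> ('v \<times> 'v) set set" where
  "faces Adj rot = face_of rot ` darts Adj"

definition edges :: "('v \<Rightarrow> 'v \<Rightarrow> bool) \<Rightarrow> 'v set set" where
  "edges Adj = {{u, v} | u v. Adj u v}"

definition triangular :: "('v \<Rightarrow> 'v \<Rightarrow> bool) \<Rightarrow> ('v \<Rightarrow> 'v list) \<Rightarrow> bool" where
  "triangular Adj rot \<longleftrightarrow> (\<forall>f \<in> faces Adj rot. card f = 3)"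

text \<open>The cellular orientable embedding determined by the rotation system
lies in S_k iff V - E + F = 2 - 2k (Euler's formula).\<close>

definition embedding_genus_is :: "'v set \<Rightarrow> ('v \<Rightarrow> 'v \<Rightarrow> bool) \<Rightarrow> ('v \<Rightarrow> 'v list) \<Rightarrow> nat \<Rightarrow> bool" where
  "embedding_genus_is V Adj rot k \<longleftrightarrow>
     int (card V) - int (card (edges Adj)) + int (card (faces Adj rot)) = 2 - 2 * int k"

datatype vtx = N nat | Va | Vb | Vc | Vd | Ve

definition is_letter :: "vtx \<Rightarrow> bool" where
  "is_letter x \<longleftrightarrow> x \<in> {Va, Vb, Vc, Vd, Ve}"

definition V23 :: "vtx set" where
  "V23 = {N i | i. i < 18} \<union> {Va, Vb, Vc, Vd, Ve}"

definition Adj23 :: "vtx \<Rightarrow> vtx \<Rightarrow> bool" where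
  "Adj23 u v \<longleftrightarrow> u \<in> V23 \<and> v \<in> V23 \<and> u \<noteq> v \<and> \<not> (is_letter u \<and> is_letter v)"

fun shift :: "nat \<Rightarrow> vtx \<Rightarrow> vtx" where
  "shift g (N i) = N ((i + g) mod 18)"
| "shift g x = x"

definition L0 :: "vtx list" where
  "L0 = [N 10, N 16, Va, N 2, Vb, N 4, Vc, N 8, Vd, N 7, Ve, N 17, N 14, N 3, N 9, N 12, N 13, N 5, N 1, N 6, N 15, N 11]"

definition L1 :: "vtx list" where
  "L1 = [N 8, N 1, Va, N 2, N 12, N 9, N 3, N 7, Vc, N 14, Vb, N 13, Ve, N 11, Vd, N 16, N 10, N 5, N 17, N 4, N 15, N 6]"

definition L2 :: "vtx list" where
  "L2 = [N 16, Va, N 17, N 7, N 4, N 3, N 12, N 2, Vd, N 10, Vc, N 11, N 14, N 13, N 8, N 6, N 9, N 15, N 1, Ve, N 5, Vb]"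

definition Lrow :: "nat \<Rightarrow> vtx list" where
  "Lrow r = (if r = 0 then L0 else if r = 1 then L1 else L2)"

end

theory Submission
  imports Defs
begin

fun pos :: "'a \<Rightarrow> 'a list \<Rightarrow> nat" where
  "pos x [] = 0"
| "pos x (y#ys) = (if x = y then 0 else Suc (pos x ys))"

lemma pos_ok: "x \<in> set xs \<Longrightarrow> pos x xs < length xs \<and> xs ! pos x xs = x"
  by (induction xs) auto

definition nxt :: "'a list \<Rightarrow> 'a \<Rightarrow> 'a" where
  "nxt xs u = xs ! ((pos u xs + 1) mod length xs)"

lemma rot_succ_nxt:
  assumes "distinct (rot v)" "u \<in> set (rot v)"
  shows "rot_succ rot v u = nxt (rot v) u"
proof -
  have p: "pos u (rot v) < length (rot v)" "rot v ! pos u (rot v) = u"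
    using pos_ok[OF assms(2)] by auto
  show ?thesis unfolding rot_succ_def nxt_def
  proof (rule the_equality)
    show "\<exists>i<length (rot v). rot v ! i = u \<and> rot v ! ((pos u (rot v) + 1) mod length (rot v)) = rot v ! ((i + 1) mod length (rot v))"
      using p by blast
  next
    fix w assume "\<exists>i<length (rot v). rot v ! i = u \<and> w = rot v ! ((i + 1) mod length (rot v))"
    then obtain i where i: "i < length (rot v)" "rot v ! i = u" "w = rot v ! ((i + 1) mod length (rot v))" by blast
    have "i = pos u (rot v)" using i p assms(1) nth_eq_iff_index_eq by metis
    then show "w = rot v ! ((pos u (rot v) + 1) mod length (rot v))" using i by simp
  qed
qed

lemma nxt_in: "xs \<noteq> [] \<Longrightarrow> nxt xs u \<in> set xs"
  unfolding nxt_def by simp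

fun rotc :: "vtx \<Rightarrow> vtx list" where
  "rotc (N i) = (if i < 18 then map (shift i) (Lrow (i mod 3)) else [])"
| "rotc Va = map N [0, 16, 17, 15, 13, 14, 12, 10, 11, 9, 7, 8, 6, 4, 5, 3, 1, 2]"
| "rotc Vb = map N [0, 2, 7, 3, 5, 10, 6, 8, 13, 9, 11, 16, 12, 14, 1, 15, 17, 4]"
| "rotc Vc = map N [0, 4, 11, 3, 7, 14, 6, 10, 17, 9, 13, 2, 12, 16, 5, 15, 1, 8]"
| "rotc Vd = map N [0, 8, 10, 3, 11, 13, 6, 14, 16, 9, 17, 1, 12, 2, 4, 15, 5, 7]"
| "rotc Ve = map N [0, 7, 2, 3, 10, 5, 6, 13, 8, 9, 16, 11, 12, 1, 14, 15, 4, 17]"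

definition vlist :: "vtx list" where
  "vlist = map N [0..<18] @ [Va, Vb, Vc, Vd, Ve]"

definition adjc :: "vtx \<Rightarrow> vtx \<Rightarrow> bool" where
  "adjc u v \<longleftrightarrow> u \<noteq> v \<and> \<not> (is_letter u \<and> is_letter v)"

definition dartlist :: "(vtx \<times> vtx) list" where
  "dartlist = concat (map (\<lambda>u. map (\<lambda>v. (u, v)) (filter (adjc u) vlist)) vlist)"

definition fsc :: "vtx \<times> vtx \<Rightarrow> vtx \<times> vtx" where
  "fsc d = (snd d, nxt (rotc (snd d)) (fst d))"

definition okd :: "vtx \<times> vtx \<Rightarrow> bool" where
  "okd d \<longleftrightarrow> fsc (fsc (fsc d)) = d \<and> fsc d \<noteq> d \<and> fsc (fsc d) \<noteq> d \<and> fsc (fsc d) \<noteq> fsc d"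

lemma check_faces: "list_all okd dartlist"
  by code_simp

lemma check_rot: "list_all (\<lambda>v. distinct (rotc v) \<and> set (rotc v) = set (filter (adjc v) vlist)) vlist"
  by code_simp


lemma funpow3_mod: "(f^^3) d = d \<Longrightarrow> (f^^n) d = (f^^(n mod 3)) d"
proof -
  assume h: "(f^^3) d = d"
  have q: "(f^^(3*q)) d = d" for q
  proof (induction q)
    case (Suc q)
    have "3 * Suc q = 3 + 3 * q" by simp
    then have "(f^^(3*Suc q)) d = (f^^3) ((f^^(3*q)) d)" by (metis funpow_add o_apply)
    then show ?case using Suc h by simp
  qed simp
  have "n = n mod 3 + 3 * (n div 3)" by simp
  then have "(f^^n) d = (f^^(n mod 3)) ((f^^(3*(n div 3))) d)"
    by (metis funpow_add o_apply)
  then show ?thesis using q by simp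
qed

lemma face_of3:
  assumes "face_step rot (face_step rot (face_step rot d)) = d"
  shows "face_of rot d = {d, face_step rot d, face_step rot (face_step rot d)}"
proof -
  let ?f = "face_step rot"
  have h: "(?f^^3) d = d" using assms by (simp add: numeral_3_eq_3)
  have m: "n mod 3 = 0 \<or> n mod 3 = 1 \<or> n mod 3 = 2" for n :: nat by auto
  show ?thesis unfolding face_of_def
  proof (intro equalityI subsetI)
    fix x assume "x \<in> {(?f ^^ n) d |n. True}"
    then obtain n where x: "x = (?f^^n) d" by blast
    then have "x = (?f^^(n mod 3)) d" using funpow3_mod[OF h] by simp
    then show "x \<in> {d, ?f d, ?f (?f d)}" using m[of n] by (auto simp: numeral_2_eq_2)
  next
    fix x assume "x \<in> {d, ?f d, ?f (?f d)}"
    then have "x = (?f^^0) d \<or> x = (?f^^1) d \<or> x = (?f^^2) d" by (auto simp: numeral_2_eq_2)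
    then show "x \<in> {(?f ^^ n) d |n. True}" by blast
  qed
qed

lemma V23_eq: "V23 = set vlist"
  unfolding V23_def vlist_def by auto

lemma distinct_vlist: "distinct vlist"
  unfolding vlist_def by (auto simp: distinct_map inj_on_def)

lemma Adj23_eq: "Adj23 u v \<longleftrightarrow> u \<in> set vlist \<and> v \<in> set vlist \<and> adjc u v"
  unfolding Adj23_def adjc_def V23_eq by auto

lemma darts_eq: "darts Adj23 = set dartlist"
  unfolding darts_def dartlist_def Adj23_eq by auto

lemma rotsys: "rotation_system V23 Adj23 rotc"
  unfolding rotation_system_def
proof
  fix v assume v: "v \<in> V23"
  then have "distinct (rotc v) \<and> set (rotc v) = set (filter (adjc v) vlist)"
    using check_rot V23_eq by (simp add: list_all_iff)
  moreover have "set (filter (adjc v) vlist) = neighbors Adj23 v"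
    using v unfolding neighbors_def Adj23_eq V23_eq by auto
  ultimately show "distinct (rotc v) \<and> set (rotc v) = neighbors Adj23 v" by simp
qed

lemma Adj23_sym: "Adj23 u v \<Longrightarrow> Adj23 v u"
  unfolding Adj23_def by auto

lemma rot_props: "Adj23 u v \<Longrightarrow> distinct (rotc v) \<and> set (rotc v) = neighbors Adj23 v"
  using rotsys unfolding rotation_system_def Adj23_def by auto

lemma fs_eq: assumes "d \<in> darts Adj23" shows "face_step rotc d = fsc d"
proof -
  obtain u v where d: "d = (u, v)" "Adj23 u v" using assms unfolding darts_def by auto
  have "distinct (rotc v)" "u \<in> set (rotc v)"
    using rot_props[OF d(2)] Adj23_sym[OF d(2)] unfolding neighbors_def by auto
  then show ?thesis unfolding face_step_def fsc_def d using rot_succ_nxt by simp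
qed

lemma fs_in: assumes "d \<in> darts Adj23" shows "face_step rotc d \<in> darts Adj23"
proof -
  obtain u v where d: "d = (u, v)" "Adj23 u v" using assms unfolding darts_def by auto
  have r: "distinct (rotc v)" "u \<in> set (rotc v)" "set (rotc v) = neighbors Adj23 v"
    using rot_props[OF d(2)] Adj23_sym[OF d(2)] unfolding neighbors_def by auto
  then have "rotc v \<noteq> []" by auto
  then have "nxt (rotc v) u \<in> neighbors Adj23 v" using nxt_in r(3) by metis
  then show ?thesis using fs_eq[OF assms] unfolding fsc_def darts_def neighbors_def d by simp
qed

lemma dart_face:
  assumes "d \<in> darts Adj23"
  shows "face_of rotc d = {d, face_step rotc d, face_step rotc (face_step rotc d)}"
    and "card (face_of rotc d) = 3"
    and "face_of rotc d \<subseteq> darts Adj23"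
proof -
  let ?f = "face_step rotc"
  have d1: "?f d \<in> darts Adj23" and d2: "?f (?f d) \<in> darts Adj23" using fs_in assms by auto
  have ok: "okd d" using check_faces assms darts_eq by (simp add: list_all_iff)
  have e: "?f d = fsc d" "?f (?f d) = fsc (fsc d)" "?f (?f (?f d)) = fsc (fsc (fsc d))"
    using fs_eq assms d1 d2 by auto
  have 3: "?f (?f (?f d)) = d" using ok e unfolding okd_def by simp
  show fo: "face_of rotc d = {d, ?f d, ?f (?f d)}" using face_of3[OF 3] .
  show "card (face_of rotc d) = 3" using ok e unfolding fo okd_def by auto
  show "face_of rotc d \<subseteq> darts Adj23" using fo assms d1 d2 by auto
qed

lemma face_same:
  assumes "d \<in> darts Adj23" "x \<in> face_of rotc d"
  shows "face_of rotc x = face_of rotc d"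
proof -
  let ?f = "face_step rotc"
  have d1: "?f d \<in> darts Adj23" and d2: "?f (?f d) \<in> darts Adj23" using fs_in assms by auto
  have 3: "?f (?f (?f d)) = d"
    using dart_face(1,2)[OF assms(1)]
    by (metis face_of3 assms(1) check_faces darts_eq fs_eq d1 d2 list_all_iff okd_def)
  have x: "x = d \<or> x = ?f d \<or> x = ?f (?f d)" using assms(2) dart_face(1)[OF assms(1)] by auto
  moreover have "x = ?f d \<Longrightarrow> ?thesis"
      using dart_face(1)[OF assms(1)] dart_face(1)[OF d1] 3 by auto
  moreover have "x = ?f (?f d) \<Longrightarrow> ?thesis"
      using dart_face(1)[OF assms(1)] dart_face(1)[OF d2] 3 by auto
  ultimately show ?thesis by blast
qed

lemma finite_darts: "finite (darts Adj23)" using darts_eq by simp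

lemma card_faces: "card (darts Adj23) = 3 * card (faces Adj23 rotc)"
proof -
  have U: "\<Union>(faces Adj23 rotc) = darts Adj23"
  proof
    show "\<Union>(faces Adj23 rotc) \<subseteq> darts Adj23" unfolding faces_def using dart_face(3) by blast
    show "darts Adj23 \<subseteq> \<Union>(faces Adj23 rotc)"
    proof
      fix d assume "d \<in> darts Adj23"
      then show "d \<in> \<Union>(faces Adj23 rotc)" unfolding faces_def using dart_face(1) by blast
    qed
  qed
  have P: "pairwise disjnt (faces Adj23 rotc)"
    unfolding pairwise_def disjnt_def faces_def
  proof (intro ballI impI)
    fix A B assume AB: "A \<in> face_of rotc ` darts Adj23" "B \<in> face_of rotc ` darts Adj23" "A \<noteq> B"
    then obtain d e where de: "d \<in> darts Adj23" "e \<in> darts Adj23" "A = face_of rotc d" "B = face_of rotc e" by blast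
    show "A \<inter> B = {}" unfolding de(3,4)
    proof (rule ccontr)
      assume "face_of rotc d \<inter> face_of rotc e \<noteq> {}"
      then obtain x where "x \<in> face_of rotc d" "x \<in> face_of rotc e" by blast
      then show False using face_same de AB(3) by metis
    qed
  qed
  have F: "\<And>A. A \<in> faces Adj23 rotc \<Longrightarrow> finite A" unfolding faces_def
    using dart_face(3) finite_darts finite_subset by blast
  have "card (darts Adj23) = sum card (faces Adj23 rotc)"
    using card_Union_disjoint[OF P F] U by simp
  also have "\<dots> = sum (\<lambda>_. 3) (faces Adj23 rotc)"
    by (rule sum.cong) (auto simp: faces_def dart_face(2))
  finally show ?thesis by simp
qed


lemma darts_sigma: "darts Adj23 = Sigma V23 (neighbors Adj23)"
  unfolding darts_def neighbors_def Adj23_def by auto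

lemma card_darts: "card (darts Adj23) = 486"
proof -
  have "card (darts Adj23) = (\<Sum>v\<in>V23. card (neighbors Adj23 v))"
  proof -
    have f1: "finite V23" by (simp add: V23_eq)
    have f2: "\<forall>a\<in>V23. finite (neighbors Adj23 a)"
      using f1 by (auto simp: neighbors_def Adj23_def intro: rev_finite_subset)
    show ?thesis unfolding darts_sigma using card_SigmaI[OF f1 f2] .
  qed
  also have "\<dots> = (\<Sum>v\<in>set vlist. length (rotc v))"
  proof (rule sum.cong[OF V23_eq])
    fix v assume "v \<in> set vlist"
    then show "card (neighbors Adj23 v) = length (rotc v)"
      using rotsys V23_eq unfolding rotation_system_def by (metis distinct_card)
  qed
  also have "\<dots> = sum_list (map (\<lambda>v. length (rotc v)) vlist)"
    using distinct_vlist by (simp add: sum_list_distinct_conv_sum_set)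
  also have "\<dots> = 486" by code_simp
  finally show ?thesis .
qed

fun key :: "vtx \<Rightarrow> nat" where
  "key (N i) = i + 5" | "key Va = 0" | "key Vb = 1" | "key Vc = 2" | "key Vd = 3" | "key Ve = 4"

lemma inj_key: "inj key"
proof (rule injI)
  fix x y assume "key x = key y" then show "x = y"
    by (cases x; cases y; simp)
qed

definition D1 :: "(vtx \<times> vtx) set" where
  "D1 = {(u, v). Adj23 u v \<and> key u < key v}"

lemma card_edges_darts: "card (darts Adj23) = 2 * card (edges Adj23)"
proof -
  have fin: "finite D1" using finite_darts unfolding D1_def darts_def
    by (rule rev_finite_subset) auto
  have U: "darts Adj23 = D1 \<union> prod.swap ` D1"
  proof
    show "darts Adj23 \<subseteq> D1 \<union> prod.swap ` D1"
    proof
      fix d assume "d \<in> darts Adj23"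
      then obtain u v where d: "d = (u, v)" "Adj23 u v" unfolding darts_def by auto
      have "u \<noteq> v" using d unfolding Adj23_def by auto
      then have "key u \<noteq> key v" using inj_key by (metis injD)
      then have "key u < key v \<or> key v < key u" by auto
      then show "d \<in> D1 \<union> prod.swap ` D1"
        using d Adj23_sym unfolding D1_def by (auto simp: image_iff)
    qed
    show "D1 \<union> prod.swap ` D1 \<subseteq> darts Adj23"
      unfolding D1_def darts_def using Adj23_sym by auto
  qed
  have disj: "D1 \<inter> prod.swap ` D1 = {}" unfolding D1_def by auto
  have c1: "card (prod.swap ` D1) = card D1" by (rule card_image) (metis inj_on_def swap_swap)
  have "card (darts Adj23) = 2 * card D1"
    using card_Un_disjoint[OF fin finite_imageI[OF fin] disj] U c1 by simp
  moreover have "edges Adj23 = (\<lambda>(u, v). {u, v}) ` D1"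
  proof
    show "(\<lambda>(u, v). {u, v}) ` D1 \<subseteq> edges Adj23" unfolding D1_def edges_def by auto
    show "edges Adj23 \<subseteq> (\<lambda>(u, v). {u, v}) ` D1"
    proof
      fix e assume "e \<in> edges Adj23"
      then obtain u v where e: "e = {u, v}" "Adj23 u v" unfolding edges_def by auto
      have "u \<noteq> v" using e unfolding Adj23_def by auto
      then have "key u \<noteq> key v" using inj_key by (metis injD)
      then have "key u < key v \<or> key v < key u" by auto
      then show "e \<in> (\<lambda>(u, v). {u, v}) ` D1"
      proof
        assume "key u < key v" then show ?thesis using e unfolding D1_def by (auto simp: image_iff)
      next
        assume "key v < key u" then have "(v, u) \<in> D1" using e Adj23_sym unfolding D1_def by auto
        moreover have "e = {v, u}" using e by auto
        ultimately show ?thesis by force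
      qed
    qed
  qed
  moreover have "inj_on (\<lambda>(u, v). {u, v}) D1"
    unfolding inj_on_def D1_def by (auto simp: doubleton_eq_iff)
  ultimately show ?thesis by (simp add: card_image)
qed

lemma card_V23: "card V23 = 23"
proof -
  have "card V23 = length vlist" by (simp add: V23_eq distinct_card distinct_vlist)
  also have "length vlist = 23" by (simp add: vlist_def)
  finally show ?thesis .
qed

theorem mainTheorem5:
  shows "\<exists>rot :: vtx \<Rightarrow> vtx list.
           (\<forall>g < 18. rot (N g) = map (shift g) (Lrow (g mod 3))) \<and>
           rotation_system V23 Adj23 rot \<and>
           triangular Adj23 rot \<and>
           embedding_genus_is V23 Adj23 rot 30"
proof (intro exI conjI)
  show "\<forall>g < 18. rotc (N g) = map (shift g) (Lrow (g mod 3))" by simp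
  show "rotation_system V23 Adj23 rotc" by (rule rotsys)
  show "triangular Adj23 rotc" unfolding triangular_def faces_def using dart_face(2) by blast
  have "card (faces Adj23 rotc) = 162" using card_faces card_darts by simp
  moreover have "card (edges Adj23) = 243" using card_edges_darts card_darts by simp
  ultimately show "embedding_genus_is V23 Adj23 rotc 30"
    unfolding embedding_genus_is_def using card_V23 by simp
qed

end
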